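(* Let $b\ge 0$ and consider the polynomial system (the case $a=c=0$) $$\dot x=x(1-y),\qquad \dot y=y(-1+x),\qquad \dot z=-bz.$$ (i) If $b=0$, the system is Darboux integrable with the first integrals $H_1=xy\exp(-x-y)$ and $H_2=z$. (ii) If $b>0$, the system is integrable with the first integrals $H_1=xy\exp(-x-y)$ and $H_2=z\,h(x,y)$, where $$h(x,y)=\exp\left(\int^{x}\frac{b}{s\left(W\!\left(-\frac{xy\,e^{s-x-y}}{s}\right)+1\right)}\,ds\right),$$ and $W$ denotes the principal branch of the Lambert $W$ function.
   Context: A first integral of a vector field $\mathcal{X}$ on an open set $U$ is a non-constant function $H$ with $\mathcal{X}H=0$ on $U$. Darboux integrable means having first integrals of Darboux type, i.e. of the form $f_1^{\lambda_1}\cdots f_p^{\lambda_p}E_1^{\mu_1}\cdots E_q^{\mu_q}$ with $f_i$ Darboux polynomials, $E_j$ exponential factors and $\lambda_i,\mu_j\in\mathbb{C}$. *)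

theory Defs
  imports "HOL-Analysis.Analysis"
begin

type_synonym pt3 = "real \<times> real \<times> real"

definition vf :: "real \<Rightarrow> pt3 \<Rightarrow> pt3" where
  "vf b v = (case v of (x, y, z) \<Rightarrow> (x * (1 - y), y * (-1 + x), - b * z))"

definition first_integral :: "(pt3 \<Rightarrow> pt3) \<Rightarrow> pt3 set \<Rightarrow> (pt3 \<Rightarrow> real) \<Rightarrow> bool" where
  "first_integral X U H \<longleftrightarrow> open U \<and> (\<exists>p\<in>U. \<exists>q\<in>U. H p \<noteq> H q) \<and>
     (\<forall>p\<in>U. \<exists>D. (H has_derivative D) (at p) \<and> D (X p) = 0)"

definition poly3 :: "(pt3 \<Rightarrow> real) \<Rightarrow> bool" where
  "poly3 F \<longleftrightarrow> (\<exists>N::nat. \<exists>c :: nat \<Rightarrow> nat \<Rightarrow> nat \<Rightarrow> real. \<forall>x y z.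
     F (x, y, z) = (\<Sum>i\<le>N. \<Sum>j\<le>N. \<Sum>k\<le>N. c i j k * x ^ i * y ^ j * z ^ k))"

definition darboux_poly :: "(pt3 \<Rightarrow> pt3) \<Rightarrow> (pt3 \<Rightarrow> real) \<Rightarrow> bool" where
  "darboux_poly X f \<longleftrightarrow> poly3 f \<and> (\<exists>p q. f p \<noteq> f q) \<and>
     (\<exists>K. poly3 K \<and> (\<forall>p. \<exists>D. (f has_derivative D) (at p) \<and> D (X p) = K p * f p))"

definition exp_factor :: "(pt3 \<Rightarrow> pt3) \<Rightarrow> (pt3 \<Rightarrow> real) \<Rightarrow> bool" where
  "exp_factor X E \<longleftrightarrow> (\<exists>g h. poly3 g \<and> poly3 h \<and> (h = (\<lambda>_. 1) \<or> darboux_poly X h) \<and>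
     (\<forall>p. h p \<noteq> 0 \<longrightarrow> E p = exp (g p / h p)) \<and>
     (\<exists>L. poly3 L \<and> (\<forall>p. h p \<noteq> 0 \<longrightarrow>
        (\<exists>D. (E has_derivative D) (at p) \<and> D (X p) = L p * E p))))"

definition darboux_type :: "(pt3 \<Rightarrow> pt3) \<Rightarrow> pt3 set \<Rightarrow> (pt3 \<Rightarrow> real) \<Rightarrow> bool" where
  "darboux_type X U H \<longleftrightarrow> (\<exists>(np::nat) (nq::nat) f (lam :: nat \<Rightarrow> complex) E (mu :: nat \<Rightarrow> complex).
     (\<forall>i<np. darboux_poly X (f i)) \<and> (\<forall>j<nq. exp_factor X (E j)) \<and>
     (\<forall>p\<in>U. complex_of_real (H p) =
        (\<Prod>i<np. complex_of_real (f i p) powr lam i) * (\<Prod>j<nq. complex_of_real (E j p) powr mu j)))"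

text \<open>Principal branch W_0 of the Lambert W function (meaningful for w \<ge> -1/e).\<close>
definition lambertW0 :: "real \<Rightarrow> real" where
  "lambertW0 w = (THE v. -1 \<le> v \<and> v * exp v = w)"

definition oint :: "real \<Rightarrow> real \<Rightarrow> (real \<Rightarrow> real) \<Rightarrow> real" where
  "oint a b f = (if a \<le> b then integral {a..b} f else - integral {b..a} f)"

definition H1 :: "pt3 \<Rightarrow> real" where
  "H1 v = (case v of (x, y, z) \<Rightarrow> x * y * exp (- x - y))"

definition hfun :: "real \<Rightarrow> real \<Rightarrow> real \<Rightarrow> real" where
  "hfun b x y = exp (oint 1 x (\<lambda>s. b / (s * (lambertW0 (- (x * y * exp (s - x - y)) / s) + 1))))"

end

theory Submission
  imports Defs
begin

lemma xexp_strict_mono: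
  fixes u v :: real
  assumes "-1 \<le> u" "u < v"
  shows "u * exp u < v * exp v"
proof (rule DERIV_pos_imp_increasing_open[OF assms(2)])
  fix x assume "u < x" "x < v"
  then show "\<exists>y. ((\<lambda>v. v * exp v) has_real_derivative y) (at x) \<and> y > 0"
  proof (intro exI conjI)
    show "((\<lambda>v. v * exp v) has_real_derivative (1 + x) * exp x) (at x)"
      by (auto intro!: derivative_eq_intros simp: algebra_simps)
    show "0 < (1 + x) * exp x" using assms \<open>u < x\<close> by (intro mult_pos_pos) auto
  qed
next
  show "continuous_on {u..v} (\<lambda>v. v * exp v)" by (intro continuous_intros)
qed

lemma xexp_inj:
  fixes u v :: real
  assumes "-1 \<le> u" "-1 \<le> v" "u * exp u = v * exp v"
  shows "u = v"
  using xexp_strict_mono[of u v] xexp_strict_mono[of v u] assms by (cases u v rule: linorder_cases) auto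

lemma W_props:
  assumes "w \<ge> - exp (-1)"
  shows "-1 \<le> lambertW0 w \<and> lambertW0 w * exp (lambertW0 w) = w"
proof -
  have "\<exists>x. -1 \<le> x \<and> x \<le> \<bar>w\<bar> + 1 \<and> x * exp x = w"
  proof (rule IVT'[of "\<lambda>x. x * exp x"])
    show "-1 * exp (-1) \<le> w" using assms by simp
    have "\<bar>w\<bar> + 1 \<le> (\<bar>w\<bar> + 1) * exp (\<bar>w\<bar> + 1)"
      using mult_left_mono[of 1 "exp (\<bar>w\<bar> + 1)" "\<bar>w\<bar> + 1"] by (simp add: one_le_exp_iff)
    then show "w \<le> (\<bar>w\<bar> + 1) * exp (\<bar>w\<bar> + 1)" by linarith
    show "continuous_on {- 1..\<bar>w\<bar> + 1} (\<lambda>x. x * exp x)" by (intro continuous_intros)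
  qed auto
  then obtain v where v: "-1 \<le> v" "v * exp v = w" by auto
  have "lambertW0 w = v"
    unfolding lambertW0_def
    by (rule the_equality) (use v xexp_inj in auto)
  then show ?thesis using v by simp
qed

lemma W_eq:
  assumes "-1 \<le> v"
  shows "lambertW0 (v * exp v) = v"
  unfolding lambertW0_def
  by (rule the_equality) (use assms xexp_inj in auto)

lemma W_gt:
  assumes "w > - exp (-1)"
  shows "lambertW0 w > -1"
proof -
  have "-1 \<le> lambertW0 w" "lambertW0 w * exp (lambertW0 w) = w" using W_props assms by auto
  moreover have "lambertW0 w \<noteq> -1" using calculation assms by auto
  ultimately show ?thesis by auto
qed

lemma W_deriv:
  assumes "w > - exp (-1)"
  shows "(lambertW0 has_real_derivative inverse ((1 + lambertW0 w) * exp (lambertW0 w))) (at w)"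
proof (rule DERIV_inverse_function[where f = "\<lambda>v. v * exp v" and a = "- exp (-1)" and b = "w + 1"])
  show "((\<lambda>v. v * exp v) has_real_derivative (1 + lambertW0 w) * exp (lambertW0 w)) (at (lambertW0 w))"
    by (auto intro!: derivative_eq_intros simp: algebra_simps)
  show "(1 + lambertW0 w) * exp (lambertW0 w) \<noteq> 0" using W_gt[OF assms] by auto
  show "- exp (- 1) < w" "w < w + 1" using assms by auto
  show "lambertW0 y * exp (lambertW0 y) = y" if "- exp (- 1) < y" "y < w + 1" for y
    using W_props that by auto
  let ?v = "lambertW0 w"
  have "isCont lambertW0 (?v * exp ?v)"
  proof (rule isCont_inverse_function[where d = "(?v + 1) / 2" and f = "\<lambda>v. v * exp v" and x = ?v])
    show "0 < (?v + 1) / 2" using W_gt[OF assms] by auto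
    show "lambertW0 (z * exp z) = z" if "\<bar>z - ?v\<bar> \<le> (?v + 1) / 2" for z
    proof -
      have a: "lambertW0 w - z \<le> (lambertW0 w + 1) / 2"
        using that abs_ge_minus_self[of "z - lambertW0 w"] by simp
      have "-1 \<le> z" using a W_gt[OF assms] by simp
      then show ?thesis by (rule W_eq)
    qed
    show "isCont (\<lambda>v. v * exp v) z" for z :: real by (auto intro!: continuous_intros)
  qed
  then show "isCont lambertW0 w" using W_props[of w] assms by simp
qed
definition Wd :: "real \<Rightarrow> real" where
  "Wd w = inverse ((1 + lambertW0 w) * exp (lambertW0 w))"

lemma W_isCont: "w > - exp (-1) \<Longrightarrow> isCont lambertW0 w"
  using W_deriv DERIV_isCont by blast

lemma W_cont_on: "continuous_on {- exp (-1)<..} lambertW0"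
  by (intro continuous_at_imp_continuous_on ballI W_isCont) auto

lemma continuous_on_W [continuous_intros]:
  assumes "continuous_on S f" "\<And>x. x \<in> S \<Longrightarrow> f x > - exp (-1)"
  shows "continuous_on S (\<lambda>x. lambertW0 (f x))"
  using continuous_on_compose2[OF W_cont_on assms(1)] assms(2) by auto

lemma Wd_cont_on [continuous_intros]:
  assumes "continuous_on S f" "\<And>x. x \<in> S \<Longrightarrow> f x > - exp (-1)"
  shows "continuous_on S (\<lambda>x. Wd (f x))"
proof -
  have nz: "(1 + lambertW0 (f x)) * exp (lambertW0 (f x)) \<noteq> 0" if "x \<in> S" for x
    using W_gt[OF assms(2)[OF that]] by auto
  show ?thesis unfolding Wd_def
    by (intro continuous_on_inverse continuous_intros assms) (use nz in auto)
qed

lemma has_derivative_W [derivative_intros]: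
  assumes "(f has_derivative f') (at x within S)" "f x > - exp (-1)"
  shows "((\<lambda>x. lambertW0 (f x)) has_derivative (\<lambda>h. Wd (f x) * f' h)) (at x within S)"
  using has_derivative_compose[OF assms(1) W_deriv[OF assms(2), unfolded has_field_derivative_def]]
  unfolding Wd_def .

lemma seg_between:
  fixes x t :: real
  assumes "0 \<le> t" "t \<le> 1"
  shows "min 1 x \<le> 1 + t * (x - 1) \<and> 1 + t * (x - 1) \<le> max 1 x"
proof (cases "x \<le> 1")
  case True
  have "t * (x - 1) \<le> 0" using True assms by (simp add: mult_nonneg_nonpos)
  moreover have "t * (x - 1) \<ge> x - 1" using True assms mult_right_mono_neg[of t 1 "x - 1"] by simp
  moreover have "min 1 x = x" "max 1 x = 1" using True by auto
  ultimately show ?thesis by linarith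
next
  case False
  have "t * (x - 1) \<ge> 0" using False assms by simp
  moreover have "t * (x - 1) \<le> x - 1" using False assms mult_right_mono[of t 1 "x - 1"] by simp
  moreover have "min 1 x = 1" "max 1 x = x" using False by auto
  ultimately show ?thesis by linarith
qed

lemma xexpm_between:
  fixes x s :: real
  assumes "0 < x" "min 1 x \<le> s" "s \<le> max 1 x"
  shows "x * exp (- x) \<le> s * exp (- s)"
proof -
  have s0: "s > 0" using assms by auto
  have l: "ln (x / s) \<le> x / s - 1" using assms s0 by (intro ln_le_minus_one) auto
  have "x / s - 1 = (x - s) / s" using s0 by (simp add: field_simps)
  also have "\<dots> \<le> x - s"
  proof -
    have "(x - s) * (s - 1) \<ge> 0"
    proof (cases "x \<le> 1")
      case True
      then have "x \<le> s" "s \<le> 1" using assms by auto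
      then show ?thesis by (intro mult_nonpos_nonpos) auto
    next
      case False
      then have "s \<le> x" "1 \<le> s" using assms by auto
      then show ?thesis by (intro mult_nonneg_nonneg) auto
    qed
    moreover have "(x - s) * (s - 1) = (x - s) * s - (x - s)" by algebra
    ultimately have "x - s \<le> (x - s) * s" by linarith
    then show ?thesis using s0 by (simp add: pos_divide_le_eq)
  qed
  finally have "ln x - x \<le> ln s - s" using l assms s0 by (simp add: ln_div)
  then have "exp (ln x - x) \<le> exp (ln s - s)" by simp
  moreover have "exp (ln x - x) = x * exp (- x)" using assms by (simp add: exp_diff exp_minus divide_inverse)
  moreover have "exp (ln s - s) = s * exp (- s)" using s0 by (simp add: exp_diff exp_minus divide_inverse)
  ultimately show ?thesis by simp
qed

definition Vg :: "(real \<times> real) set" where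
  "Vg = {p. 0 < fst p \<and> snd p < fst p * exp (- fst p - 1)}"

lemma open_Vg: "open Vg"
  unfolding Vg_def Collect_conj_eq
  by (intro open_Int open_Collect_less continuous_intros)

lemma Vg_dom:
  assumes "(x, c) \<in> Vg" "min 1 x \<le> s" "s \<le> max 1 x"
  shows "0 < s \<and> - c * exp s / s > - exp (-1)"
proof -
  have x: "0 < x" "c < x * exp (- x - 1)" using assms by (auto simp: Vg_def)
  have s0: "0 < s" using assms x by auto
  have "- c * exp s / s > - exp (-1)"
  proof (cases "c \<le> 0")
    case True
    then have "c * exp s / s \<le> 0" using s0 by (intro divide_nonpos_pos mult_nonpos_nonneg) auto
    then have "- c * exp s / s \<ge> 0" by simp
    moreover have "- exp (-1::real) < 0" by simp
    ultimately show ?thesis by linarith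
  next
    case False
    have "c < x * exp (- x) * exp (-1)" using x by (simp add: exp_diff exp_minus field_simps)
    also have "\<dots> \<le> s * exp (- s) * exp (-1)"
      using xexpm_between[OF x(1) assms(2,3)] by simp
    finally have "c * exp s < s * exp (-1)"
      using s0 by (simp add: exp_minus field_simps)
    then show ?thesis using s0 by (simp add: field_simps)
  qed
  then show ?thesis using s0 by simp
qed

definition gg :: "real \<Rightarrow> real \<Rightarrow> real \<Rightarrow> real" where
  "gg b s c = b / (s * (lambertW0 (- c * exp s / s) + 1))"

lemma Vg_dom2:
  assumes "(x, c) \<in> Vg" "min 1 x \<le> s" "s \<le> max 1 x"
  shows "s \<noteq> 0" "- c * exp s / s > - exp (-1)" "lambertW0 (- c * exp s / s) + 1 > 0"
    "s * (lambertW0 (- c * exp s / s) + 1) \<noteq> 0"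
  using Vg_dom[OF assms] W_gt[of "- c * exp s / s"] by auto

lemma gg_cont:
  assumes "(x, c) \<in> Vg"
  shows "continuous_on {min 1 x..max 1 x} (\<lambda>s. gg b s c)"
  unfolding gg_def
  by (intro continuous_intros) (use Vg_dom2[OF assms] in auto)

lemma oint_subst:
  assumes "(x, c) \<in> Vg"
  shows "oint 1 x (\<lambda>s. gg b s c) = integral {0..1} (\<lambda>t. (x - 1) * gg b (1 + t * (x - 1)) c)"
proof -
  have "((\<lambda>t. (x - 1) *\<^sub>R gg b (1 + t * (x - 1)) c) has_integral
     (integral {1 + 0 * (x - 1)..1 + 1 * (x - 1)} (\<lambda>s. gg b s c) -
      integral {1 + 1 * (x - 1)..1 + 0 * (x - 1)} (\<lambda>s. gg b s c))) {0..1}"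
  proof (rule has_integral_substitution_general[of "{}" 0 1 "\<lambda>t. 1 + t * (x - 1)" "min 1 x" "max 1 x"])
    show "(\<lambda>t. 1 + t * (x - 1)) ` {0..1} \<subseteq> {min 1 x..max 1 x}"
      using seg_between by auto
    show "continuous_on {min 1 x..max 1 x} (\<lambda>s. gg b s c)" by (rule gg_cont[OF assms])
    show "continuous_on {0..1} (\<lambda>t. 1 + t * (x - 1))" by (intro continuous_intros)
    show "((\<lambda>t. 1 + t * (x - 1)) has_real_derivative x - 1) (at t within {0..1})" for t
      by (auto intro!: derivative_eq_intros)
  qed auto
  then have "((\<lambda>t. (x - 1) * gg b (1 + t * (x - 1)) c) has_integral
     (integral {1..x} (\<lambda>s. gg b s c) - integral {x..1} (\<lambda>s. gg b s c))) {0..1}"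
    by simp
  then have "integral {0..1} (\<lambda>t. (x - 1) * gg b (1 + t * (x - 1)) c) =
     integral {1..x} (\<lambda>s. gg b s c) - integral {x..1} (\<lambda>s. gg b s c)"
    by (rule integral_unique)
  then show ?thesis unfolding oint_def by (cases "x = 1") auto
qed

definition wa :: "real \<Rightarrow> real \<Rightarrow> real" where "wa s c = - c * exp s / s"
definition QQ :: "real \<Rightarrow> real \<Rightarrow> real" where "QQ s c = s * (lambertW0 (wa s c) + 1)"
definition Qs :: "real \<Rightarrow> real \<Rightarrow> real" where
  "Qs s c = (lambertW0 (wa s c) + 1) + s * (Wd (wa s c) * (- c * (exp s * s - exp s) / s\<^sup>2))"
definition Qc :: "real \<Rightarrow> real \<Rightarrow> real" where
  "Qc s c = s * (Wd (wa s c) * (- exp s / s))"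
definition ggs :: "real \<Rightarrow> real \<Rightarrow> real \<Rightarrow> real" where "ggs b s c = - b * Qs s c / (QQ s c)\<^sup>2"
definition ggc :: "real \<Rightarrow> real \<Rightarrow> real \<Rightarrow> real" where "ggc b s c = - b * Qc s c / (QQ s c)\<^sup>2"

lemma wa_deriv2:
  fixes s c :: real
  assumes "s \<noteq> 0"
  shows "((\<lambda>p. - snd p * exp (fst p) / fst p) has_derivative
     (\<lambda>h. (- c * (exp s * s - exp s) / s\<^sup>2) * fst h + (- exp s / s) * snd h)) (at (s, c) within S)"
  apply (rule has_derivative_eq_rhs)
   apply (rule derivative_intros)+
  using assms apply simp
  apply (rule ext)
  using assms apply (simp add: field_simps power2_eq_square)
  done

lemma gg_deriv2:
  fixes s c :: real
  assumes "s \<noteq> 0" "wa s c > - exp (-1)" "lambertW0 (wa s c) + 1 \<noteq> 0"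
  shows "((\<lambda>p. gg b (fst p) (snd p)) has_derivative (\<lambda>h. ggs b s c * fst h + ggc b s c * snd h)) (at (s, c) within S)"
  unfolding gg_def
  apply (rule has_derivative_eq_rhs)
   apply (rule derivative_intros has_derivative_const | use assms in \<open>simp add: wa_def; fail\<close>)+
  apply (rule ext)
  subgoal for h
  proof -
    define U where "U = lambertW0 (- (c * exp s / s)) + 1"
    define D where "D = Wd (- (c * exp s / s))"
    have VU: "lambertW0 (- (c * exp s / s)) = U - 1" by (simp add: U_def)
    have nz: "U \<noteq> 0" using assms by (auto simp: U_def wa_def)
    show ?thesis
      unfolding ggs_def ggc_def Qs_def Qc_def QQ_def wa_def
      using nz assms(1) by (simp add: VU D_def[symmetric] field_simps power2_eq_square)
  qed
  done

definition psx :: "real \<Rightarrow> real \<Rightarrow> real \<Rightarrow> real \<Rightarrow> real" where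
  "psx b x c t = gg b (1 + t * (x - 1)) c + (x - 1) * (ggs b (1 + t * (x - 1)) c * t)"
definition psc :: "real \<Rightarrow> real \<Rightarrow> real \<Rightarrow> real \<Rightarrow> real" where
  "psc b x c t = (x - 1) * ggc b (1 + t * (x - 1)) c"

lemma Vg_seg:
  assumes "(x, c) \<in> Vg" "0 \<le> t" "t \<le> 1"
  shows "1 + t * (x - 1) \<noteq> 0" "wa (1 + t * (x - 1)) c > - exp (-1)"
    "lambertW0 (wa (1 + t * (x - 1)) c) + 1 \<noteq> 0" "QQ (1 + t * (x - 1)) c \<noteq> 0"
  using Vg_dom2[OF assms(1), of "1 + t * (x - 1)"] seg_between[OF assms(2,3), of x]
  by (auto simp: wa_def QQ_def)

lemma psi_deriv:
  assumes "(x, c) \<in> Vg" "0 \<le> t" "t \<le> 1"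
  shows "((\<lambda>p. (fst p - 1) * gg b (1 + t * (fst p - 1)) (snd p)) has_derivative
     (\<lambda>h. psx b x c t * fst h + psc b x c t * snd h)) (at (x, c) within S)"
proof -
  let ?s = "1 + t * (x - 1)"
  have m: "((\<lambda>p::real\<times>real. (1 + t * (fst p - 1), snd p)) has_derivative (\<lambda>h. (t * fst h, snd h))) (at (x, c) within S)"
    by (rule has_derivative_eq_rhs, (rule derivative_intros has_derivative_const)+) auto
  have g: "((\<lambda>p. gg b (fst p) (snd p)) has_derivative (\<lambda>h. ggs b ?s c * fst h + ggc b ?s c * snd h)) (at (?s, c))"
    using gg_deriv2[of ?s c b UNIV] Vg_seg[OF assms] by simp
  have g2: "((\<lambda>p. gg b (1 + t * (fst p - 1)) (snd p)) has_derivative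
      (\<lambda>h. ggs b ?s c * (t * fst h) + ggc b ?s c * snd h)) (at (x, c) within S)"
    using has_derivative_compose[OF m, of "\<lambda>p. gg b (fst p) (snd p)"
        "\<lambda>h. ggs b ?s c * fst h + ggc b ?s c * snd h"] g by simp
  have f1: "((\<lambda>p::real\<times>real. fst p - 1) has_derivative (\<lambda>h. fst h)) (at (x, c) within S)"
    by (rule has_derivative_eq_rhs, (rule derivative_intros has_derivative_const)+) auto
  show ?thesis
    using has_derivative_mult[OF f1 g2]
    by (simp add: psx_def psc_def algebra_simps)
qed

lemma psi_cont:
  assumes "U \<subseteq> Vg"
  shows "continuous_on (U \<times> {0..1}) (\<lambda>q. psx b (fst (fst q)) (snd (fst q)) (snd q) *\<^sub>R fst_blinfun +
      psc b (fst (fst q)) (snd (fst q)) (snd q) *\<^sub>R snd_blinfun)"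
proof -
  have d: "1 + snd q * (fst (fst q) - 1) \<noteq> 0 \<and> wa (1 + snd q * (fst (fst q) - 1)) (snd (fst q)) > - exp (-1) \<and>
    lambertW0 (wa (1 + snd q * (fst (fst q) - 1)) (snd (fst q))) + 1 \<noteq> 0 \<and>
    QQ (1 + snd q * (fst (fst q) - 1)) (snd (fst q)) \<noteq> 0" if "q \<in> U \<times> {0..1}" for q
  proof -
    obtain x c t where q: "q = ((x, c), t)" by (metis prod.collapse)
    have "(x, c) \<in> Vg" "0 \<le> t" "t \<le> 1" using that assms q by auto
    from Vg_seg[OF this] show ?thesis using q by simp
  qed
  have d2: "- snd (fst q) * exp (1 + snd q * (fst (fst q) - 1)) / (1 + snd q * (fst (fst q) - 1)) > - exp (-1)"
    if "q \<in> U \<times> {0..1}" for q using d[OF that] by (simp add: wa_def)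
  have da: "\<forall>q\<in>U \<times> {0..1}. 1 + snd q * (fst (fst q) - 1) \<noteq> 0" using d by blast
  have dd: "\<forall>q\<in>U \<times> {0..1}. (1 + snd q * (fst (fst q) - 1))\<^sup>2 \<noteq> 0" using d by simp
  have dc: "\<forall>q\<in>U \<times> {0..1}. (1 + snd q * (fst (fst q) - 1)) * (lambertW0
          (- snd (fst q) * exp (1 + snd q * (fst (fst q) - 1)) / (1 + snd q * (fst (fst q) - 1))) + 1) \<noteq> 0"
    using d by (simp add: QQ_def wa_def)
  have de: "\<forall>q\<in>U \<times> {0..1}. ((1 + snd q * (fst (fst q) - 1)) * (lambertW0
          (- snd (fst q) * exp (1 + snd q * (fst (fst q) - 1)) / (1 + snd q * (fst (fst q) - 1))) + 1))\<^sup>2 \<noteq> 0"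
    using dc by simp
  show ?thesis
    unfolding psx_def psc_def gg_def ggs_def ggc_def Qs_def Qc_def QQ_def wa_def
    by (intro continuous_intros) (use da d2 dc dd de in blast)+
qed

lemma bl_eq: "blinfun_apply (a *\<^sub>R fst_blinfun + b *\<^sub>R snd_blinfun) = (\<lambda>h::real\<times>real. a * fst h + b * snd h)"
  by (rule ext) (simp add: plus_blinfun.rep_eq scaleR_blinfun.rep_eq)

definition Gf :: "real \<Rightarrow> real \<times> real \<Rightarrow> real" where
  "Gf b p = oint 1 (fst p) (\<lambda>s. gg b s (snd p))"

lemma f_cont:
  fixes x c :: real
  assumes "(x, c) \<in> Vg"
  shows "continuous_on {0..1} (\<lambda>t. (x - 1) * gg b (1 + t * (x - 1)) c)"
proof -
  have i: "(\<lambda>t. 1 + t * (x - 1)) ` {0..1} \<subseteq> {min 1 x..max 1 x}" using seg_between by auto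
  have "continuous_on {0..1} (\<lambda>t::real. 1 + t * (x - 1))" by (intro continuous_intros)
  from continuous_on_compose2[OF gg_cont[OF assms] this i]
  have "continuous_on {0..1} (\<lambda>t. gg b (1 + t * (x - 1)) c)" .
  then show ?thesis by (intro continuous_intros)
qed

lemma gg_t_deriv:
  fixes x c t :: real
  assumes "(x, c) \<in> Vg" "0 \<le> t" "t \<le> 1"
  shows "((\<lambda>t. t * gg b (1 + t * (x - 1)) c) has_real_derivative psx b x c t) (at t within S)"
proof -
  let ?s = "1 + t * (x - 1)"
  have m: "((\<lambda>t::real. (1 + t * (x - 1), c)) has_derivative (\<lambda>h. (h * (x - 1), 0))) (at t within S)"
    by (rule has_derivative_eq_rhs, (rule derivative_intros has_derivative_const)+) auto
  have g: "((\<lambda>p. gg b (fst p) (snd p)) has_derivative (\<lambda>h. ggs b ?s c * fst h + ggc b ?s c * snd h)) (at (?s, c))"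
    using gg_deriv2[of ?s c b UNIV] Vg_seg[OF assms] by simp
  have g2: "((\<lambda>t. gg b (1 + t * (x - 1)) c) has_derivative (\<lambda>h. ggs b ?s c * (h * (x - 1)))) (at t within S)"
    using has_derivative_compose[OF m, of "\<lambda>p. gg b (fst p) (snd p)"
        "\<lambda>h. ggs b ?s c * fst h + ggc b ?s c * snd h"] g by simp
  have "((\<lambda>t. t * gg b (1 + t * (x - 1)) c) has_derivative
      (\<lambda>h. t * (ggs b ?s c * (h * (x - 1))) + h * gg b ?s c)) (at t within S)"
    using has_derivative_mult[OF has_derivative_ident g2] by simp
  then show ?thesis
    unfolding has_field_derivative_def
    by (rule has_derivative_eq_rhs) (auto simp: psx_def algebra_simps)
qed

lemma Gf_deriv:
  assumes p0: "(x0, c0) \<in> Vg"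
  shows "\<exists>D. (Gf b has_derivative D) (at (x0, c0)) \<and> (\<forall>h. D (h, 0) = h * gg b x0 c0)"
proof -
  obtain r where r: "r > 0" "ball (x0, c0) r \<subseteq> Vg" using open_Vg p0 openE by blast
  define U where "U = ball (x0, c0) r"
  define fx :: "real \<times> real \<Rightarrow> real \<Rightarrow> (real \<times> real) \<Rightarrow>\<^sub>L real" where "fx p t = psx b (fst p) (snd p) t *\<^sub>R fst_blinfun + psc b (fst p) (snd p) t *\<^sub>R snd_blinfun" for p t
  define f :: "real \<times> real \<Rightarrow> real \<Rightarrow> real" where "f p t = (fst p - 1) * gg b (1 + t * (fst p - 1)) (snd p)" for p t
  have UV: "U \<subseteq> Vg" using r U_def by simp
  have x0U: "(x0, c0) \<in> U" using r U_def by simp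
  have oU: "open U" unfolding U_def by simp
  have lb: "((\<lambda>p. integral (cbox 0 1) (f p)) has_derivative blinfun_apply (integral (cbox 0 1) (fx (x0, c0)))) (at (x0, c0) within U)"
  proof (rule leibniz_rule)
    fix p t assume pt: "p \<in> U" "t \<in> cbox (0::real) 1"
    obtain x c where p: "p = (x, c)" by (metis prod.collapse)
    have "(x, c) \<in> Vg" "0 \<le> t" "t \<le> 1" using pt p UV by auto
    from psi_deriv[OF this, of b U]
    show "((\<lambda>p. f p t) has_derivative blinfun_apply (fx p t)) (at p within U)"
      unfolding f_def fx_def p bl_eq by simp
  next
    fix p assume "p \<in> U"
    then have "(fst p, snd p) \<in> Vg" using UV by auto
    from f_cont[OF this, of b] show "f p integrable_on cbox 0 1"
      unfolding f_def by (simp add: integrable_continuous_interval)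
  next
    show "continuous_on (U \<times> cbox 0 1) (\<lambda>(p, t). fx p t)"
      using psi_cont[OF UV, of b] unfolding fx_def by (simp add: case_prod_beta')
  qed (use x0U U_def in \<open>auto simp del: mem_ball\<close>)
  have "((\<lambda>p. integral (cbox 0 1) (f p)) has_derivative blinfun_apply (integral (cbox 0 1) (fx (x0, c0)))) (at (x0, c0))"
    using lb unfolding at_within_open[OF x0U oU] .
  then have Gd: "(Gf b has_derivative blinfun_apply (integral (cbox 0 1) (fx (x0, c0)))) (at (x0, c0))"
  proof (rule has_derivative_transform_within_open)
    show "open U" "(x0, c0) \<in> U" using x0U oU by auto
    fix p assume "p \<in> U"
    then have "(fst p, snd p) \<in> Vg" using UV by auto
    from oint_subst[OF this, of b] show "integral (cbox 0 1) (f p) = Gf b p"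
      unfolding Gf_def f_def by simp
  qed
  have fxc: "continuous_on {0..1} (fx (x0, c0))"
  proof -
    have "continuous_on ({(x0, c0)} \<times> {0..1}) (\<lambda>q. fx (fst q) (snd q))"
      using psi_cont[of "{(x0, c0)}" b] p0 unfolding fx_def by simp
    have i: "(\<lambda>t. ((x0, c0), t)) ` {0..1} \<subseteq> {(x0, c0)} \<times> {0..1}" by auto
    have "continuous_on {0..1} (\<lambda>t::real. ((x0, c0), t))" by (intro continuous_intros)
    from continuous_on_compose2[OF \<open>continuous_on ({(x0, c0)} \<times> {0..1}) _\<close> this i]
    show ?thesis by simp
  qed
  have int1: "integral {0..1} (psx b x0 c0) = gg b x0 c0"
  proof -
    have "(psx b x0 c0 has_integral ((\<lambda>t. t * gg b (1 + t * (x0 - 1)) c0) 1 - (\<lambda>t. t * gg b (1 + t * (x0 - 1)) c0) 0)) {0..1}"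
    proof (rule fundamental_theorem_of_calculus)
      fix t :: real assume "t \<in> {0..1}"
      then show "((\<lambda>t. t * gg b (1 + t * (x0 - 1)) c0) has_vector_derivative psx b x0 c0 t) (at t within {0..1})"
        using gg_t_deriv[OF p0, of t b "{0..1}"]
        by (simp add: has_real_derivative_iff_has_vector_derivative)
    qed simp
    then show ?thesis by (simp add: integral_unique)
  qed
  show ?thesis
  proof (intro exI conjI allI)
    show "(Gf b has_derivative blinfun_apply (integral (cbox 0 1) (fx (x0, c0)))) (at (x0, c0))" by (rule Gd)
    fix h :: real
    have "blinfun_apply (integral (cbox 0 1) (fx (x0, c0))) (h, 0) =
        integral (cbox 0 1) (\<lambda>t. blinfun_apply (fx (x0, c0) t) (h, 0))"
      by (rule blinfun_apply_integral) (use fxc in \<open>simp add: integrable_continuous_interval\<close>)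
    also have "\<dots> = integral {0..1} (\<lambda>t. h * psx b x0 c0 t)"
      unfolding fx_def bl_eq by (simp add: mult.commute)
    also have "\<dots> = h * gg b x0 c0" using int1 by simp
    finally show "blinfun_apply (integral (cbox 0 1) (fx (x0, c0))) (h, 0) = h * gg b x0 c0" .
  qed
qed

lemma poly3_affine:
  assumes "\<And>x y z. F (x, y, z) = a + ax * x + ay * y + az * z"
  shows "poly3 F"
  unfolding poly3_def
proof (intro exI allI)
  fix x y z :: real
  let ?c = "\<lambda>i j k. if i = 0 \<and> j = 0 \<and> k = 0 then a else if i = 1 \<and> j = 0 \<and> k = 0 then ax
     else if i = 0 \<and> j = 1 \<and> k = 0 then ay else if i = 0 \<and> j = 0 \<and> k = 1 then az else (0::real)"
  show "F (x, y, z) = (\<Sum>i\<le>Suc 0. \<Sum>j\<le>Suc 0. \<Sum>k\<le>Suc 0. ?c i j k * x ^ i * y ^ j * z ^ k)"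
    using assms by simp
qed

lemma exD: "(f has_derivative D) F \<Longrightarrow> P D \<Longrightarrow> \<exists>D. (f has_derivative D) F \<and> P D"
  by blast

lemma H1_eq: "H1 = (\<lambda>v. fst v * fst (snd v) * exp (- fst v - fst (snd v)))"
  by (auto simp: H1_def split: prod.splits)

lemma H1_deriv: "\<exists>D. (H1 has_derivative D) (at p) \<and> D (vf b p) = 0"
proof -
  obtain x y z where p: "p = (x, y, z)" by (metis prod.collapse)
  let ?E = "exp (- x - y)"
  have "((\<lambda>v. fst v * fst (snd v) * exp (- fst v - fst (snd v))) has_derivative
      (\<lambda>h. (fst h * y + x * fst (snd h)) * ?E + x * y * (?E * (- fst h - fst (snd h))))) (at p)"
    unfolding p
    by (rule has_derivative_eq_rhs, (rule derivative_intros)+) (auto simp: algebra_simps)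
  then show ?thesis unfolding H1_eq
    by (rule exD) (auto simp: p vf_def algebra_simps)
qed

lemma z_deriv: "\<exists>D. ((\<lambda>(x::real, y::real, z::real). z) has_derivative D) (at p) \<and> D (vf b p) = - b * snd (snd p)"
proof -
  have e: "(\<lambda>(x::real, y::real, z::real). z) = (\<lambda>v. snd (snd v))" by auto
  have "((\<lambda>v::pt3. snd (snd v)) has_derivative (\<lambda>h. snd (snd h))) (at p)"
    by (rule derivative_intros)+
  then show ?thesis unfolding e
    by (rule exD) (auto simp: vf_def split: prod.splits)
qed

lemma ye_bound:
  fixes y :: real
  assumes "y < 1"
  shows "y * exp (- y) < exp (-1)"
  using xexp_strict_mono[of "-1" "-y"] assms by simp

lemma hfun_eq: "hfun b x y = exp (Gf b (x, x * y * exp (- x - y)))"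
proof -
  have "(\<lambda>s. b / (s * (lambertW0 (- (x * y * exp (s - x - y)) / s) + 1))) = (\<lambda>s. gg b s (x * y * exp (- x - y)))"
  proof
    fix s
    have "exp (s - x - y) = exp (- x - y) * exp s" by (simp add: exp_add[symmetric])
    then show "b / (s * (lambertW0 (- (x * y * exp (s - x - y)) / s) + 1)) = gg b s (x * y * exp (- x - y))"
      by (simp add: gg_def mult.assoc)
  qed
  then show ?thesis by (simp add: hfun_def Gf_def)
qed

lemma H2_deriv:
  assumes b: "b > 0" and p: "p \<in> {(x, y, z). 0 < x \<and> y < 1}"
  shows "\<exists>D. ((\<lambda>(x, y, z). z * hfun b x y) has_derivative D) (at p) \<and> D (vf b p) = 0"
proof -
  obtain x y z where pp: "p = (x, y, z)" by (metis prod.collapse)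
  have x: "0 < x" and y: "y < 1" using p pp by auto
  let ?E = "exp (- x - y)"
  let ?c = "x * y * ?E"
  have Vg: "(x, ?c) \<in> Vg"
  proof -
    have "y * exp (- y) < exp (-1)" using ye_bound[OF y] .
    then have "x * exp (- x) * (y * exp (- y)) < x * exp (- x) * exp (-1)" using x by simp
    then show ?thesis using x by (simp add: Vg_def exp_diff exp_minus field_simps)
  qed
  obtain D where D: "(Gf b has_derivative D) (at (x, ?c))" "\<And>h. D (h, 0) = h * gg b x ?c"
    using Gf_deriv[OF Vg, of b] by blast
  define m where "m v = (fst v, fst v * fst (snd v) * exp (- fst v - fst (snd v)))" for v :: pt3
  define m' where "m' h = (fst h, (fst h * y + x * fst (snd h)) * ?E + x * y * (?E * (- fst h - fst (snd h))))" for h :: pt3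
  have md: "(m has_derivative m') (at p)"
    unfolding m_def m'_def pp
    by (rule has_derivative_eq_rhs, (rule derivative_intros)+) (auto simp: algebra_simps)
  have mp: "m p = (x, ?c)" by (simp add: m_def pp)
  have cd: "((\<lambda>v. Gf b (m v)) has_derivative (\<lambda>h. D (m' h))) (at p)"
    using has_derivative_compose[OF md, of "Gf b" D] D(1) mp by simp
  have ed: "((\<lambda>v. exp (Gf b (m v))) has_derivative (\<lambda>h. exp (Gf b (m p)) * D (m' h))) (at p)"
    using has_derivative_compose[OF cd, of exp "(*) (exp (Gf b (m p)))"]
      DERIV_exp[of "Gf b (m p)", unfolded has_field_derivative_def] by simp
  have zd: "((\<lambda>v::pt3. snd (snd v)) has_derivative (\<lambda>h. snd (snd h))) (at p)"
    by (rule derivative_intros)+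
  have full: "((\<lambda>v. snd (snd v) * exp (Gf b (m v))) has_derivative
      (\<lambda>h. snd (snd p) * (exp (Gf b (m p)) * D (m' h)) + snd (snd h) * exp (Gf b (m p)))) (at p)"
    using has_derivative_mult[OF zd ed] by simp
  have feq: "(\<lambda>(x, y, z). z * hfun b x y) = (\<lambda>v. snd (snd v) * exp (Gf b (m v)))"
    by (auto simp: hfun_eq m_def)
  have W: "lambertW0 (- ?c * exp x / x) = - y"
  proof -
    have "- ?c * exp x / x = (- y) * exp (- y)" using x by (simp add: exp_diff exp_minus field_simps)
    then show ?thesis using W_eq[of "- y"] y by simp
  qed
  have gval: "gg b x ?c = b / (x * (1 - y))" unfolding gg_def W by simp
  have m'v: "m' (vf b p) = (x * (1 - y), 0)" by (simp add: m'_def vf_def pp algebra_simps)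
  have "D (m' (vf b p)) = b" using x y by (simp add: m'v D(2) gval)
  then show ?thesis unfolding feq
    by (intro exD[OF full]) (simp add: vf_def pp algebra_simps)
qed

theorem theorem1p3:
  fixes b :: real
  assumes "b \<ge> 0"
  shows "(b = 0 \<longrightarrow>
            first_integral (vf b) UNIV H1 \<and> darboux_type (vf b) UNIV H1 \<and>
            first_integral (vf b) UNIV (\<lambda>(x, y, z). z) \<and> darboux_type (vf b) UNIV (\<lambda>(x, y, z). z))
       \<and> (b > 0 \<longrightarrow>
            first_integral (vf b) {(x, y, z). 0 < x \<and> y < 1} H1 \<and>
            first_integral (vf b) {(x, y, z). 0 < x \<and> y < 1} (\<lambda>(x, y, z). z * hfun b x y))"
proof -
  have openU: "open {(x::real, y::real, z::real). 0 < x \<and> y < 1}"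
  proof -
    have "{(x::real, y::real, z::real). 0 < x \<and> y < 1} = {v. 0 < fst v} \<inter> {v. fst (snd v) < 1}" by auto
    then show ?thesis by (simp add: open_Int open_Collect_less continuous_intros)
  qed
  have H1ne: "\<exists>p\<in>U. \<exists>q\<in>U. H1 p \<noteq> H1 q" if "(1::real, 0::real, 0::real) \<in> U" "(1::real, -1::real, 0::real) \<in> U" for U
    using that by (intro bexI[of _ "(1::real, 0::real, 0::real)"] bexI[of _ "(1::real, -1::real, 0::real)"]) (auto simp: H1_def)
  have fiH1: "first_integral (vf b) U H1" if "open U" "(1::real, 0::real, 0::real) \<in> U" "(1::real, -1::real, 0::real) \<in> U" for U
    unfolding first_integral_def using that H1ne H1_deriv by blast
  have part1: "first_integral (vf b) UNIV H1 \<and> darboux_type (vf b) UNIV H1 \<and>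
            first_integral (vf b) UNIV (\<lambda>(x, y, z). z) \<and> darboux_type (vf b) UNIV (\<lambda>(x, y, z). z)"
    if b0: "b = 0"
  proof (intro conjI)
    show "first_integral (vf b) UNIV H1" by (rule fiH1) auto
    show "first_integral (vf b) UNIV (\<lambda>(x, y, z). z)"
      unfolding first_integral_def
    proof (intro conjI ballI)
      show "\<exists>p\<in>(UNIV::pt3 set). \<exists>q\<in>(UNIV::pt3 set). (case p of (x, y, z) \<Rightarrow> z) \<noteq> (case q of (x, y, z) \<Rightarrow> z)"
        by (intro bexI[of _ "(0::real, 0::real, 0::real)"] bexI[of _ "(0::real, 0::real, 1::real)"]) auto
      fix p :: pt3
      show "\<exists>D. ((\<lambda>(x, y, z). z) has_derivative D) (at p) \<and> D (vf b p) = 0"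
        using z_deriv[of p b] b0 by simp
    qed simp
    have dpx: "darboux_poly (vf b) fst"
      unfolding darboux_poly_def
    proof (intro conjI exI)
      show "poly3 (fst :: pt3 \<Rightarrow> real)" by (rule poly3_affine[where a = 0 and ax = 1 and ay = 0 and az = 0]) simp
      show "fst (0::real, 0::real, 0::real) \<noteq> fst (1::real, 0::real, 0::real)" by simp
      show "poly3 (\<lambda>v::pt3. 1 - fst (snd v))" by (rule poly3_affine[where a = 1 and ax = 0 and ay = "-1" and az = 0]) simp
      show "\<forall>p. \<exists>D. (fst has_derivative D) (at p) \<and> D (vf b p) = (1 - fst (snd p)) * fst p"
      proof
        fix p :: pt3
        show "\<exists>D. (fst has_derivative D) (at p) \<and> D (vf b p) = (1 - fst (snd p)) * fst p"
          by (rule exD[OF has_derivative_fst[OF has_derivative_ident]]) (auto simp: vf_def split: prod.splits)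
      qed
    qed
    have dpy: "darboux_poly (vf b) (\<lambda>v. fst (snd v))"
      unfolding darboux_poly_def
    proof (intro conjI exI)
      show "poly3 (\<lambda>v::pt3. fst (snd v))" by (rule poly3_affine[where a = 0 and ax = 0 and ay = 1 and az = 0]) simp
      show "fst (snd (0::real, 0::real, 0::real)) \<noteq> fst (snd (0::real, 1::real, 0::real))" by simp
      show "poly3 (\<lambda>v::pt3. - 1 + fst v)" by (rule poly3_affine[where a = "-1" and ax = 1 and ay = 0 and az = 0]) simp
      show "\<forall>p. \<exists>D. ((\<lambda>v. fst (snd v)) has_derivative D) (at p) \<and> D (vf b p) = (- 1 + fst p) * fst (snd p)"
      proof
        fix p :: pt3
        have "((\<lambda>v::pt3. fst (snd v)) has_derivative (\<lambda>h. fst (snd h))) (at p)" by (rule derivative_intros)+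
        then show "\<exists>D. ((\<lambda>v. fst (snd v)) has_derivative D) (at p) \<and> D (vf b p) = (- 1 + fst p) * fst (snd p)"
          by (rule exD) (auto simp: vf_def split: prod.splits)
      qed
    qed
    have efE: "exp_factor (vf b) (\<lambda>v. exp (- fst v - fst (snd v)))"
      unfolding exp_factor_def
    proof (intro exI conjI)
      show "poly3 (\<lambda>v::pt3. - fst v - fst (snd v))" by (rule poly3_affine[where a = 0 and ax = "-1" and ay = "-1" and az = 0]) simp
      show "poly3 (\<lambda>_::pt3. 1::real)" by (rule poly3_affine[where a = 1 and ax = 0 and ay = 0 and az = 0]) simp
      show "(\<lambda>_::pt3. 1::real) = (\<lambda>_. 1) \<or> darboux_poly (vf b) (\<lambda>_. 1)" by simp
      show "\<forall>p::pt3. (1::real) \<noteq> 0 \<longrightarrow> exp (- fst p - fst (snd p)) = exp ((- fst p - fst (snd p)) / 1)" by simp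
      show "poly3 (\<lambda>v::pt3. fst (snd v) - fst v)" by (rule poly3_affine[where a = 0 and ax = "-1" and ay = 1 and az = 0]) simp
      show "\<forall>p. (1::real) \<noteq> 0 \<longrightarrow> (\<exists>D. ((\<lambda>v. exp (- fst v - fst (snd v))) has_derivative D) (at p) \<and>
          D (vf b p) = (fst (snd p) - fst p) * exp (- fst p - fst (snd p)))"
      proof (intro allI impI)
        fix p :: pt3
        have "((\<lambda>v::pt3. exp (- fst v - fst (snd v))) has_derivative
            (\<lambda>h. exp (- fst p - fst (snd p)) * (- fst h - fst (snd h)))) (at p)"
          by (rule has_derivative_eq_rhs, (rule derivative_intros)+) (auto simp: algebra_simps)
        then show "\<exists>D. ((\<lambda>v. exp (- fst v - fst (snd v))) has_derivative D) (at p) \<and>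
          D (vf b p) = (fst (snd p) - fst p) * exp (- fst p - fst (snd p))"
          by (rule exD) (auto simp: vf_def algebra_simps split: prod.splits)
      qed
    qed
    show "darboux_type (vf b) UNIV H1"
      unfolding darboux_type_def
      apply (rule exI[of _ 2], rule exI[of _ 1], rule exI[of _ "\<lambda>i. if i = 0 then fst else (\<lambda>v. fst (snd v))"],
        rule exI[of _ "\<lambda>_. 1"], rule exI[of _ "\<lambda>_ v. exp (- fst v - fst (snd v))"], rule exI[of _ "\<lambda>_. 1"])
      apply (intro conjI)
      subgoal using dpx dpy by (auto simp: less_Suc_eq numeral_2_eq_2)
      subgoal using efE by auto
      subgoal by (auto simp: H1_eq numeral_2_eq_2 lessThan_Suc)
      done
    have dpz: "darboux_poly (vf b) (\<lambda>v. snd (snd v))"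
      unfolding darboux_poly_def
    proof (intro conjI exI)
      show "poly3 (\<lambda>v::pt3. snd (snd v))" by (rule poly3_affine[where a = 0 and ax = 0 and ay = 0 and az = 1]) simp
      show "snd (snd (0::real, 0::real, 0::real)) \<noteq> snd (snd (0::real, 0::real, 1::real))" by simp
      show "poly3 (\<lambda>v::pt3. - b)" by (rule poly3_affine[where a = "-b" and ax = 0 and ay = 0 and az = 0]) simp
      show "\<forall>p. \<exists>D. ((\<lambda>v. snd (snd v)) has_derivative D) (at p) \<and> D (vf b p) = - b * snd (snd p)"
      proof
        fix p :: pt3
        have "((\<lambda>v::pt3. snd (snd v)) has_derivative (\<lambda>h. snd (snd h))) (at p)" by (rule derivative_intros)+
        then show "\<exists>D. ((\<lambda>v. snd (snd v)) has_derivative D) (at p) \<and> D (vf b p) = - b * snd (snd p)"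
          by (rule exD) (auto simp: vf_def split: prod.splits)
      qed
    qed
    show "darboux_type (vf b) UNIV (\<lambda>(x, y, z). z)"
      unfolding darboux_type_def
      apply (rule exI[of _ 1], rule exI[of _ 0], rule exI[of _ "\<lambda>i. (\<lambda>v. snd (snd v))"],
        rule exI[of _ "\<lambda>_. 1"], rule exI[of _ "\<lambda>_ v. 1"], rule exI[of _ "\<lambda>_. 1"])
      apply (intro conjI)
      subgoal using dpz by auto
      subgoal by auto
      subgoal by (auto split: prod.splits)
      done
  qed
  have part2: "first_integral (vf b) {(x, y, z). 0 < x \<and> y < 1} H1 \<and>
            first_integral (vf b) {(x, y, z). 0 < x \<and> y < 1} (\<lambda>(x, y, z). z * hfun b x y)"
    if bp: "b > 0"
  proof
    show "first_integral (vf b) {(x, y, z). 0 < x \<and> y < 1} H1" by (rule fiH1) (use openU in auto)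
    show "first_integral (vf b) {(x, y, z). 0 < x \<and> y < 1} (\<lambda>(x, y, z). z * hfun b x y)"
      unfolding first_integral_def
    proof (intro conjI ballI)
      show "open {(x::real, y::real, z::real). 0 < x \<and> y < 1}" by (rule openU)
      have "hfun b 1 0 = 1" by (simp add: hfun_def oint_def)
      then show "\<exists>p\<in>{(x, y, z). 0 < x \<and> y < 1}. \<exists>q\<in>{(x, y, z). 0 < x \<and> y < 1}.
          (case p of (x, y, z) \<Rightarrow> z * hfun b x y) \<noteq> (case q of (x, y, z) \<Rightarrow> z * hfun b x y)"
        by (intro bexI[of _ "(1::real, 0::real, 0::real)"] bexI[of _ "(1::real, 0::real, 1::real)"]) auto
      fix p assume "p \<in> {(x::real, y::real, z::real). 0 < x \<and> y < 1}"
      from H2_deriv[OF bp this]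
      show "\<exists>D. ((\<lambda>(x, y, z). z * hfun b x y) has_derivative D) (at p) \<and> D (vf b p) = 0" .
    qed
  qed
  show ?thesis using part1 part2 by blast
qed

end
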